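(* Let $H$ be a divisible group all of whose elements are almost right Engel. Then for any $g,x\in H$ there is a positive integer $n(x,g)$ such that $[[g,{}_nx],g]=1$ for all $n\ge n(x,g)$.
   Context: Commutators: $a^b=b^{-1}ab$, $[a,b]=a^{-1}b^{-1}ab$, and $[a,{}_nb]=[\dots[[a,b],b],\dots,b]$ with $b$ repeated $n$ times. An element $g$ of a group $G$ is almost right Engel if there is a finite set $\mathscr R\subseteq G$ such that for every $x\in G$ there is a positive integer $r(x,g)$ with $[g,{}_nx]\in\mathscr R$ for all $n\ge r(x,g)$. A group $H$ is divisible if for every $h\in H$ and every positive integer $k$ there is $x\in H$ with $x^k=h$. *)

theory Defs
  imports "HOL-Algebra.Group"
begin

definition comm :: "('a, 'b) monoid_scheme \<Rightarrow> 'a \<Rightarrow> 'a \<Rightarrow> 'a" where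
  "comm G a b = inv\<^bsub>G\<^esub> a \<otimes>\<^bsub>G\<^esub> inv\<^bsub>G\<^esub> b \<otimes>\<^bsub>G\<^esub> a \<otimes>\<^bsub>G\<^esub> b"

fun iter_comm :: "('a, 'b) monoid_scheme \<Rightarrow> 'a \<Rightarrow> nat \<Rightarrow> 'a \<Rightarrow> 'a" where
  "iter_comm G a 0 b = a"
| "iter_comm G a (Suc n) b = comm G (iter_comm G a n b) b"

definition almost_right_engel :: "('a, 'b) monoid_scheme \<Rightarrow> 'a \<Rightarrow> bool" where
  "almost_right_engel G g \<longleftrightarrow>
     (\<exists>R. finite R \<and> R \<subseteq> carrier G \<and>
        (\<forall>x\<in>carrier G. \<exists>r::nat. r > 0 \<and> (\<forall>n\<ge>r. iter_comm G g n x \<in> R)))"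

definition divisible_group :: "('a, 'b) monoid_scheme \<Rightarrow> bool" where
  "divisible_group G \<longleftrightarrow>
     (\<forall>h\<in>carrier G. \<forall>k::nat. k > 0 \<longrightarrow> (\<exists>x\<in>carrier G. x [^]\<^bsub>G\<^esub> k = h))"

end

theory Submission
  imports Defs
begin

lemma not_inj_obtain:
  assumes "\<not> inj_on f {..(s::nat)}"
  obtains a b where "a \<le> s" "b \<le> s" "a \<noteq> b" "f a = f b"
  using assms unfolding inj_on_def by auto

definition conjg :: "('a, 'b) monoid_scheme \<Rightarrow> 'a \<Rightarrow> 'a \<Rightarrow> 'a" where
  "conjg G a y = inv\<^bsub>G\<^esub> a \<otimes>\<^bsub>G\<^esub> y \<otimes>\<^bsub>G\<^esub> a"

context group
begin

lemma cancel1[simp]: "a \<in> carrier G \<Longrightarrow> w \<in> carrier G \<Longrightarrow> a \<otimes> (inv a \<otimes> w) = w"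
  by (simp add: m_assoc[symmetric])

lemma cancel2[simp]: "a \<in> carrier G \<Longrightarrow> w \<in> carrier G \<Longrightarrow> inv a \<otimes> (a \<otimes> w) = w"
  by (simp add: m_assoc[symmetric])

lemma comm_closed[simp]: "a \<in> carrier G \<Longrightarrow> b \<in> carrier G \<Longrightarrow> comm G a b \<in> carrier G"
  by (simp add: comm_def)

lemma iter_comm_closed[simp]: "a \<in> carrier G \<Longrightarrow> b \<in> carrier G \<Longrightarrow> iter_comm G a n b \<in> carrier G"
  by (induction n) auto

lemma conjg_closed[simp]: "a \<in> carrier G \<Longrightarrow> y \<in> carrier G \<Longrightarrow> conjg G a y \<in> carrier G"
  by (simp add: conjg_def)

lemma conjg_mult: "a \<in> carrier G \<Longrightarrow> y \<in> carrier G \<Longrightarrow> z \<in> carrier G \<Longrightarrow>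
   conjg G a (y \<otimes> z) = conjg G a y \<otimes> conjg G a z"
  by (simp add: conjg_def m_assoc)

lemma conjg_inv: "a \<in> carrier G \<Longrightarrow> y \<in> carrier G \<Longrightarrow>
   conjg G a (inv y) = inv (conjg G a y)"
  by (simp add: conjg_def inv_mult_group m_assoc)

lemma conjg_comm: "a \<in> carrier G \<Longrightarrow> y \<in> carrier G \<Longrightarrow> z \<in> carrier G \<Longrightarrow>
   conjg G a (comm G y z) = comm G (conjg G a y) (conjg G a z)"
  by (simp add: comm_def conjg_mult conjg_inv)

lemma conjg_iter: "a \<in> carrier G \<Longrightarrow> y \<in> carrier G \<Longrightarrow> z \<in> carrier G \<Longrightarrow>
   conjg G a (iter_comm G y n z) = iter_comm G (conjg G a y) n (conjg G a z)"
  by (induction n) (auto simp: conjg_comm)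

lemma conjg_fix:
  assumes h: "a \<in> carrier G" "y \<in> carrier G" "a \<otimes> y = y \<otimes> a"
  shows "conjg G a y = y"
proof -
  have e: "y \<otimes> a = a \<otimes> y" using h(3) by simp
  have "inv a \<otimes> y \<otimes> a = inv a \<otimes> (a \<otimes> y)" using h(1,2) by (simp add: m_assoc e)
  also have "\<dots> = y" using h(1,2) by simp
  finally show ?thesis unfolding conjg_def .
qed

lemma conjg_fix_rev: "a \<in> carrier G \<Longrightarrow> y \<in> carrier G \<Longrightarrow> conjg G a y = y \<Longrightarrow> a \<otimes> y = y \<otimes> a"
proof -
  assume h: "a \<in> carrier G" "y \<in> carrier G" "conjg G a y = y"
  have "a \<otimes> y = a \<otimes> (inv a \<otimes> y \<otimes> a)" using h by (simp add: conjg_def)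
  also have "\<dots> = y \<otimes> a" using h by (simp add: m_assoc)
  finally show ?thesis .
qed

lemma conjg_mult_left: "a \<in> carrier G \<Longrightarrow> b \<in> carrier G \<Longrightarrow> y \<in> carrier G \<Longrightarrow>
   conjg G (a \<otimes> b) y = conjg G b (conjg G a y)"
  by (simp add: conjg_def inv_mult_group m_assoc)

lemma conjg_inj: "a \<in> carrier G \<Longrightarrow> y \<in> carrier G \<Longrightarrow> z \<in> carrier G \<Longrightarrow>
   conjg G a y = conjg G a z \<Longrightarrow> y = z"
  unfolding conjg_def by (simp add: m_assoc)

lemma comm_one: "y \<in> carrier G \<Longrightarrow> z \<in> carrier G \<Longrightarrow> y \<otimes> z = z \<otimes> y \<Longrightarrow> comm G y z = \<one>"
proof -
  assume h: "y \<in> carrier G" "z \<in> carrier G" "y \<otimes> z = z \<otimes> y"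
  show ?thesis using h by (simp add: comm_def m_assoc h(3))
qed

lemma pow_commutes: "a \<in> carrier G \<Longrightarrow> y \<in> carrier G \<Longrightarrow> a \<otimes> y = y \<otimes> a \<Longrightarrow>
   a [^] (n::nat) \<otimes> y = y \<otimes> a [^] n"
proof (induction n)
  case 0 then show ?case by simp
next
  case (Suc n)
  have "a [^] Suc n \<otimes> y = a [^] n \<otimes> (a \<otimes> y)" by (simp add: Suc m_assoc)
  also have "\<dots> = (a [^] n \<otimes> y) \<otimes> a" using Suc by (simp add: m_assoc[symmetric])
  also have "\<dots> = y \<otimes> a [^] n \<otimes> a" using Suc by metis
  also have "\<dots> = y \<otimes> a [^] Suc n" using Suc by (simp add: m_assoc)
  finally show ?case .
qed


lemma main5p1:
  assumes div: "divisible_group G" and eng: "almost_right_engel G g"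
    and g: "g \<in> carrier G" and x: "x \<in> carrier G"
  shows "\<exists>N::nat. N > 0 \<and> (\<forall>n\<ge>N. comm G (iter_comm G g n x) g = \<one>)"
proof -
  from eng obtain R where R: "finite R" "R \<subseteq> carrier G"
    and RR: "\<forall>y\<in>carrier G. \<exists>r::nat. r > 0 \<and> (\<forall>n\<ge>r. iter_comm G g n y \<in> R)"
    unfolding almost_right_engel_def by blast
  from bchoice[OF RR] obtain r where r0: "\<forall>y\<in>carrier G. r y > 0 \<and> (\<forall>n\<ge>r y. iter_comm G g n y \<in> R)"
    by blast
  hence r: "\<forall>y\<in>carrier G. \<forall>n\<ge>r y. iter_comm G g n y \<in> R" by blast
  define s where "s = card R"
  have "0 < (fact s :: nat)" by simp
  then obtain h where h: "h \<in> carrier G" "h [^] (fact s :: nat) = g"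
    using div g unfolding divisible_group_def by blast
  have hg: "h \<otimes> g = g \<otimes> h" using pow_commutes[of h h "fact s"] h by simp
  have cg: "conjg G (h[^](i::nat)) g = g" for i
    using conjg_fix pow_commutes[OF h(1) g hg] h g by simp
  define N where "N = Suc (\<Sum>i\<le>s. r (conjg G (h[^](i::nat)) x))"
  show ?thesis
  proof (intro exI conjI allI impI)
    show "N > 0" by (simp add: N_def)
    fix n assume n: "N \<le> n"
    define w where "w = iter_comm G g n x"
    have w: "w \<in> carrier G" by (simp add: w_def g x)
    have inR: "conjg G (h[^]i) w \<in> R" if "i \<le> s" for i :: nat
    proof -
      have "r (conjg G (h[^]i) x) \<le> (\<Sum>i\<le>s. r (conjg G (h[^](i::nat)) x))"
        using that by (intro member_le_sum) auto
      hence "r (conjg G (h[^]i) x) \<le> n" using n N_def by simp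
      moreover have "conjg G (h[^]i) w = iter_comm G g n (conjg G (h[^]i) x)"
        using conjg_iter cg w_def g x h by simp
      ultimately show ?thesis using r h x by simp
    qed
    have nij: "\<not> inj_on (\<lambda>i::nat. conjg G (h[^]i) w) {..s}"
    proof
      assume inj: "inj_on (\<lambda>i::nat. conjg G (h[^]i) w) {..s}"
      have "card ((\<lambda>i::nat. conjg G (h[^]i) w) ` {..s}) = Suc s" using card_image[OF inj] by simp
      moreover have "(\<lambda>i::nat. conjg G (h[^]i) w) ` {..s} \<subseteq> R" using inR by auto
      hence "card ((\<lambda>i::nat. conjg G (h[^]i) w) ` {..s}) \<le> s" by (simp add: s_def card_mono R(1))
      ultimately show False by simp
    qed
    obtain a b :: nat where ab: "a \<le> s" "b \<le> s" "a \<noteq> b"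
      "conjg G (h[^]a) w = conjg G (h[^]b) w"
      by (rule not_inj_obtain[OF nij])
    obtain i j :: nat where ij: "i \<le> s" "j \<le> s" "i < j"
      "conjg G (h[^]i) w = conjg G (h[^]j) w"
    proof (cases "a < b")
      case True then show ?thesis using that ab by blast
    next
      case False then have "b < a" using ab(3) by simp
      then show ?thesis using that[of b a] ab by simp
    qed
    define d where "d = j - i"
    have d: "0 < d" "d \<le> s" using ij by (auto simp: d_def)
    have c1: "conjg G (h[^]i) (conjg G (h[^]d) w) = conjg G (h[^]d \<otimes> h[^]i) w"
      using conjg_mult_left h w by simp
    have "h[^]d \<otimes> h[^]i = h[^]j" using nat_pow_mult h ij d_def by simp
    hence "conjg G (h[^]d \<otimes> h[^]i) w = conjg G (h[^]j) w" by simp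
    with c1 have "conjg G (h[^]i) (conjg G (h[^]d) w) = conjg G (h[^]j) w" by simp
    also have "conjg G (h[^]j) w = conjg G (h[^]i) w" using ij(4) by (rule sym)
    finally have "conjg G (h[^]i) (conjg G (h[^]d) w) = conjg G (h[^]i) w" .
    hence "conjg G (h[^]d) w = w" by (rule conjg_inj[rotated 3]) (simp_all add: h w)
    hence comm_d: "h[^]d \<otimes> w = w \<otimes> h[^]d" by (rule conjg_fix_rev[rotated 2]) (simp_all add: h w)
    have "d dvd fact s" using d by (intro dvd_fact) auto
    then obtain q where q: "fact s = d * q" by blast
    have "g = h [^] (d * q)" using h(2) q by simp
    also have "\<dots> = (h[^]d) [^] q" by (simp add: nat_pow_pow h(1))
    finally have gq: "g = (h[^]d) [^] q" .
    have "(h[^]d) [^] q \<otimes> w = w \<otimes> (h[^]d) [^] q"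
      by (rule pow_commutes[OF nat_pow_closed[OF h(1)] w comm_d])
    hence "w \<otimes> g = g \<otimes> w" unfolding gq[symmetric] by (rule sym)
    from comm_one[OF w g this] show "comm G (iter_comm G g n x) g = \<one>" unfolding w_def .
  qed
qed

end

theorem lemma5p1:
  fixes H (structure)
  assumes "group H"
    and "divisible_group H"
    and "\<forall>g\<in>carrier H. almost_right_engel H g"
    and "g \<in> carrier H" and "x \<in> carrier H"
  shows "\<exists>N::nat. N > 0 \<and> (\<forall>n\<ge>N. comm H (iter_comm H g n x) g = \<one>)"
  using group.main5p1[OF assms(1,2)] assms(3,4,5) by blast

end
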